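(* Let $\mathcal{G}$ be a directed acyclic graph over variables $\mathbf{V}=\mathbf{O}\cup\mathbf{L}$ (observed and latent), let $X\in\mathbf{O}$ and let $Y$ be a variable of $\mathcal{G}$, and let $\Pi$ be the policy space with policy inputs $\mathbf{Pa}^\Pi\subseteq\mathbf{O}\setminus\mathbf{De}(X)$. If there exists a $\pi$-backdoor admissible set with respect to $\langle\mathcal{G},\Pi\rangle$, then $\mathbf{Z}=\mathbf{An}(\{X,Y\})\cap\mathbf{Pa}^\Pi$ is a $\pi$-backdoor admissible set with respect to $\langle\mathcal{G},\Pi\rangle$.
   Context: $\mathbf{An}(\cdot)$ and $\mathbf{De}(\cdot)$ denote ancestors and descendants in $\mathcal{G}$. A policy is a stochastic mapping $\pi(X\mid\mathbf{Pa}^\Pi)$ from values of $\mathbf{Pa}^\Pi$ to distributions over $X$; the policy space $\Pi$ is the set of all such mappings. $\mathcal{G}_{\underline{X}}$ denotes the graph obtained from $\mathcal{G}$ by removing all edges outgoing from $X$. A set $\mathbf{Z}$ is $\pi$-backdoor admissible w.r.t. $\langle\mathcal{G},\Pi\rangle$ iff $\mathbf{Z}\subseteq\mathbf{Pa}^\Pi$ and $Y$ is d-separated from $X$ by $\mathbf{Z}$ in $\mathcal{G}_{\underline{X}}$. *)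

theory Defs
  imports Main
begin

text \<open>A causal graph is given by a finite vertex set V and a directed edge
relation E \<subseteq> V \<times> V; (a,b) \<in> E means a \<rightarrow> b.\<close>

definition is_dag :: "'v set \<Rightarrow> ('v \<times> 'v) set \<Rightarrow> bool" where
  "is_dag V E \<longleftrightarrow> finite V \<and> E \<subseteq> V \<times> V \<and> acyclic E"

definition An :: "'v set \<Rightarrow> ('v \<times> 'v) set \<Rightarrow> 'v set \<Rightarrow> 'v set" where
  "An V E S = {a \<in> V. \<exists>s\<in>S. (a, s) \<in> E\<^sup>*}"

definition De :: "'v set \<Rightarrow> ('v \<times> 'v) set \<Rightarrow> 'v set \<Rightarrow> 'v set" where
  "De V E S = {d \<in> V. \<exists>s\<in>S. (s, d) \<in> E\<^sup>*}"

definition remove_out :: "('v \<times> 'v) set \<Rightarrow> 'v \<Rightarrow> ('v \<times> 'v) set" where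
  "remove_out E X = {(a, b) \<in> E. a \<noteq> X}"

definition is_path :: "('v \<times> 'v) set \<Rightarrow> 'v list \<Rightarrow> 'v \<Rightarrow> 'v \<Rightarrow> bool" where
  "is_path E p a b \<longleftrightarrow> length p \<ge> 2 \<and> distinct p \<and> hd p = a \<and> last p = b \<and>
     (\<forall>i. Suc i < length p \<longrightarrow> ((p ! i, p ! Suc i) \<in> E \<or> (p ! Suc i, p ! i) \<in> E))"

definition collider :: "('v \<times> 'v) set \<Rightarrow> 'v list \<Rightarrow> nat \<Rightarrow> bool" where
  "collider E p i \<longleftrightarrow> (p ! (i - 1), p ! i) \<in> E \<and> (p ! Suc i, p ! i) \<in> E"

definition active_path :: "'v set \<Rightarrow> ('v \<times> 'v) set \<Rightarrow> 'v set \<Rightarrow> 'v list \<Rightarrow> bool" where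
  "active_path V E Z p \<longleftrightarrow>
     (\<forall>i. 0 < i \<and> Suc i < length p \<longrightarrow>
        (collider E p i \<longrightarrow> p ! i \<in> An V E Z) \<and>
        (\<not> collider E p i \<longrightarrow> p ! i \<notin> Z))"

definition d_separated :: "'v set \<Rightarrow> ('v \<times> 'v) set \<Rightarrow> 'v \<Rightarrow> 'v \<Rightarrow> 'v set \<Rightarrow> bool" where
  "d_separated V E Y X Z \<longleftrightarrow> \<not> (\<exists>p. is_path E p X Y \<and> active_path V E Z p)"

text \<open>\<pi>-backdoor admissibility w.r.t. \<langle>G,\<Pi>\<rangle>; the policy space \<Pi> enters only
through its input set Pa (= Pa^\<Pi>).\<close>
definition pi_backdoor_admissible ::
  "'v set \<Rightarrow> ('v \<times> 'v) set \<Rightarrow> 'v set \<Rightarrow> 'v \<Rightarrow> 'v \<Rightarrow> 'v set \<Rightarrow> bool" where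
  "pi_backdoor_admissible V E Pa X Y Z \<longleftrightarrow>
     Z \<subseteq> Pa \<and> d_separated V (remove_out E X) Y X Z"

end

theory Submission
  imports Defs
begin

fun trips :: "'a list \<Rightarrow> ('a \<times> 'a \<times> 'a) list" where
  "trips (a # b # c # r) = (a, b, c) # trips (b # c # r)"
| "trips _ = []"

lemma trips_nth: "trips w = map (\<lambda>i. (w!i, w!Suc i, w!Suc (Suc i))) [0..<length w - 2]"
proof (induction w rule: trips.induct)
  case (1 a b c r)
  have "[0..<length (a#b#c#r) - 2] = 0 # map Suc [0..<length (b#c#r) - 2]"
    by (simp add: upt_conv_Cons map_Suc_upt del: upt_Suc)
  then show ?case using 1 by simp
qed auto

lemma trips_split: "trips (xs @ [a, b] @ ys) = trips (xs @ [a, b]) @ trips ([a, b] @ ys)"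
by (induction xs rule: trips.induct) (cases ys; simp)+

lemma trips_Cons_sub: "set (trips w) \<subseteq> set (trips (x # w))"
  by (cases w rule: trips.cases) auto

lemma trips_suffix: "set (trips ys) \<subseteq> set (trips (xs @ ys))"
  by (induction xs) (auto dest: trips_Cons_sub[THEN subsetD])

lemma trips_prefix: "set (trips xs) \<subseteq> set (trips (xs @ ys))"
  by (induction xs rule: trips.induct) auto

definition adj :: "('a \<times> 'a) set \<Rightarrow> 'a \<Rightarrow> 'a \<Rightarrow> bool" where
  "adj R x y \<longleftrightarrow> (x, y) \<in> R \<or> (y, x) \<in> R"

definition ok :: "('a \<times> 'a) set \<Rightarrow> 'a set \<Rightarrow> 'a set \<Rightarrow> 'a \<times> 'a \<times> 'a \<Rightarrow> bool" where
  "ok R S Z t \<longleftrightarrow> (case t of (a, b, c) \<Rightarrow> if (a, b) \<in> R \<and> (c, b) \<in> R then b \<in> S else b \<notin> Z)"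

definition bad :: "('a \<times> 'a) set \<Rightarrow> 'a set \<Rightarrow> 'a \<times> 'a \<times> 'a \<Rightarrow> bool" where
  "bad R S t \<longleftrightarrow> (case t of (a, b, c) \<Rightarrow> (a, b) \<in> R \<and> (c, b) \<in> R \<and> b \<notin> S)"

definition nbad :: "('a \<times> 'a) set \<Rightarrow> 'a set \<Rightarrow> 'a list \<Rightarrow> nat" where
  "nbad R S w = length (filter (bad R S) (trips w))"

definition sw :: "'a \<times> 'a \<times> 'a \<Rightarrow> 'a \<times> 'a \<times> 'a" where
  "sw t = (case t of (a, b, c) \<Rightarrow> (c, b, a))"

lemma trips_rev: "trips (rev w) = rev (map sw (trips w))"
proof (rule nth_equalityI)
  show "length (trips (rev w)) = length (rev (map sw (trips w)))" by (simp add: trips_nth)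
next
  fix i assume "i < length (trips (rev w))"
  then have i: "i < length w - 2" by (simp add: trips_nth)
  then show "trips (rev w) ! i = rev (map sw (trips w)) ! i"
    by (simp add: trips_nth rev_nth sw_def Suc_diff_Suc numeral_2_eq_2)
qed

lemma set_trips: "t \<in> set (trips w) \<longleftrightarrow> (\<exists>i. Suc (Suc i) < length w \<and> t = (w!i, w!Suc i, w!Suc (Suc i)))"
  by (auto simp: trips_nth) (metis less_diff_conv add_2_eq_Suc')

lemma active_path_iff: "active_path V R Z p \<longleftrightarrow> (\<forall>t\<in>set (trips p). ok R (An V R Z) Z t)"
proof
  assume a: "active_path V R Z p"
  show "\<forall>t\<in>set (trips p). ok R (An V R Z) Z t"
  proof
    fix t assume "t \<in> set (trips p)"
    then obtain i where i: "Suc (Suc i) < length p" "t = (p!i, p!Suc i, p!Suc (Suc i))" by (auto simp: set_trips)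
    then show "ok R (An V R Z) Z t" using a[unfolded active_path_def, rule_format, of "Suc i"]
      by (auto simp: ok_def collider_def)
  qed
next
  assume a: "\<forall>t\<in>set (trips p). ok R (An V R Z) Z t"
  show "active_path V R Z p" unfolding active_path_def
  proof (intro allI impI)
    fix i assume i: "0 < i \<and> Suc i < length p"
    then obtain j where j: "i = Suc j" by (cases i) auto
    have "(p!j, p!Suc j, p!Suc (Suc j)) \<in> set (trips p)" using i j by (auto simp: set_trips)
    then show "(collider R p i \<longrightarrow> p ! i \<in> An V R Z) \<and> (\<not> collider R p i \<longrightarrow> p ! i \<notin> Z)"
      using a j by (auto simp: ok_def collider_def split: if_splits)
  qed
qed

lemma succ_nth: "successively P p \<longleftrightarrow> (\<forall>i. Suc i < length p \<longrightarrow> P (p!i) (p!Suc i))"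
proof (induction P p rule: successively.induct)
  case (3 P x y xs)
  then show ?case by (auto simp: nth_Cons split: nat.splits)
qed auto

lemma trips_decomp: "t \<in> set (trips w) \<Longrightarrow> \<exists>xs ys a b c. t = (a, b, c) \<and> w = xs @ [a, b, c] @ ys"
proof (induction w rule: trips.induct)
  case (1 a b c r)
  show ?case
  proof (cases "t = (a, b, c)")
    case True then show ?thesis by (intro exI[of _ "[]"] exI[of _ r]) auto
  next
    case False
    then have "t \<in> set (trips (b # c # r))" using 1(2) by simp
    from 1(1)[OF this] obtain xs ys a' b' c' where "t = (a', b', c')" "b # c # r = xs @ [a', b', c'] @ ys" by blast
    then show ?thesis by (intro exI[of _ "a # xs"] exI[of _ ys]) auto
  qed
qed auto

lemma trips_infix: "(a, b, c) \<in> set (trips (xs @ [a, b, c] @ ys))"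
proof -
  have "(a, b, c) \<in> set (trips ([a, b, c] @ ys))" by simp
  then show ?thesis using trips_suffix by blast
qed

lemma ok_rev: "\<forall>t\<in>set (trips w). ok R S Z t \<Longrightarrow> \<forall>t\<in>set (trips (rev w)). ok R S Z t"
  by (auto simp: trips_rev sw_def ok_def split: prod.splits)

lemma nbad_rev: "nbad R S (rev w) = nbad R S w"
proof -
  have "bad R S \<circ> sw = bad R S" by (auto simp: bad_def sw_def fun_eq_iff split: prod.splits)
  then show ?thesis by (simp add: nbad_def trips_rev rev_filter[symmetric] filter_map)
qed

lemma adj_rev: "successively (adj R) (rev w) \<longleftrightarrow> successively (adj R) w"
proof -
  have eq: "(\<lambda>x y. adj R y x) = adj R" by (auto simp: adj_def fun_eq_iff)
  show ?thesis by (simp only: successively_rev eq)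
qed

lemma acyc2: "acyclic R \<Longrightarrow> (x, y) \<in> R \<Longrightarrow> (y, x) \<in> R \<Longrightarrow> False"
  by (meson acyclic_def trancl.trancl_into_trancl r_into_trancl')

lemma chain:
  "successively (adj R) (u # v # rest) \<Longrightarrow> (u, v) \<in> R \<Longrightarrow>
   (\<exists>a b c. (a, b, c) \<in> set (trips (u # v # rest)) \<and> (a, b) \<in> R \<and> (c, b) \<in> R \<and> (u, b) \<in> R\<^sup>*)
   \<or> successively (\<lambda>x y. (x, y) \<in> R) (u # v # rest)"
proof (induction rest arbitrary: u v)
  case Nil then show ?case by simp
next
  case (Cons c rest)
  show ?case
  proof (cases "(c, v) \<in> R")
    case True
    then show ?thesis using Cons.prems by (intro disjI1 exI[of _ u] exI[of _ v] exI[of _ c]) auto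
  next
    case False
    then have vc: "(v, c) \<in> R" using Cons.prems by (auto simp: adj_def)
    have "successively (adj R) (v # c # rest)" using Cons.prems by simp
    from Cons.IH[OF this vc] show ?thesis
    proof
      assume "\<exists>a b c'. (a, b, c') \<in> set (trips (v # c # rest)) \<and> (a, b) \<in> R \<and> (c', b) \<in> R \<and> (v, b) \<in> R\<^sup>*"
      then obtain a b c' where "(a, b, c') \<in> set (trips (v # c # rest))" "(a, b) \<in> R" "(c', b) \<in> R" "(v, b) \<in> R\<^sup>*"
        by blast
      then show ?thesis using Cons.prems(2)
        by (intro disjI1 exI[of _ a] exI[of _ b] exI[of _ c']) (auto intro: converse_rtrancl_into_rtrancl)
    next
      assume "successively (\<lambda>x y. (x, y) \<in> R) (v # c # rest)"
      then show ?thesis using Cons.prems(2) by simp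
    qed
  qed
qed

lemma succ_rtrancl: "successively (\<lambda>x y. (x, y) \<in> R) (u # r) \<Longrightarrow> (u, last (u # r)) \<in> R\<^sup>*"
  by (induction r arbitrary: u) (auto intro: converse_rtrancl_into_rtrancl)

lemma H:
  assumes "successively (adj R) w" "\<forall>t\<in>set (trips w). ok R S Z t" "w = xs @ [b, c] @ ys" "(b, c) \<in> R"
  shows "(b, last w) \<in> R\<^sup>* \<or> (\<exists>s\<in>S. (b, s) \<in> R\<^sup>*)"
proof -
  have sa: "successively (adj R) (b # c # ys)" using assms(1,3) by (simp add: successively_append_iff)
  have lw: "last w = last (b # c # ys)" using assms(3) by simp
  from chain[OF sa assms(4)] show ?thesis
  proof
    assume "\<exists>a b' c'. (a, b', c') \<in> set (trips (b # c # ys)) \<and> (a, b') \<in> R \<and> (c', b') \<in> R \<and> (b, b') \<in> R\<^sup>*"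
    then obtain a b' c' where t: "(a, b', c') \<in> set (trips (b # c # ys))" "(a, b') \<in> R" "(c', b') \<in> R" "(b, b') \<in> R\<^sup>*"
      by blast
    have "(a, b', c') \<in> set (trips w)" using t(1) trips_suffix[of "b # c # ys" xs] assms(3) by auto
    then have "b' \<in> S" using assms(2) t by (auto simp: ok_def)
    then show ?thesis using t by blast
  next
    assume "successively (\<lambda>x y. (x, y) \<in> R) (b # c # ys)"
    then show ?thesis using succ_rtrancl lw by metis
  qed
qed

lemma dpath: "(c, t) \<in> R\<^sup>* \<Longrightarrow> \<exists>d. d \<noteq> [] \<and> hd d = c \<and> last d = t \<and> successively (\<lambda>x y. (x, y) \<in> R) d \<and> (\<forall>y\<in>set d. (c, y) \<in> R\<^sup>*)"
proof (induction rule: rtrancl_induct)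
  case base then show ?case by (intro exI[of _ "[c]"]) auto
next
  case (step y z)
  then obtain d where d: "d \<noteq> [] \<and> hd d = c \<and> last d = y \<and> successively (\<lambda>x y. (x, y) \<in> R) d \<and> (\<forall>y\<in>set d. (c, y) \<in> R\<^sup>*)" by blast
  then show ?case using step by (intro exI[of _ "d @ [z]"]) (auto simp: successively_append_iff hd_append)
qed

lemma succ_adj_V: "successively (adj R) w \<Longrightarrow> R \<subseteq> V \<times> V \<Longrightarrow> 2 \<le> length w \<Longrightarrow> set w \<subseteq> V"
proof (induction "adj R" w rule: successively.induct)
  case (3 x y xs)
  then show ?case by (cases xs) (auto simp: adj_def)
qed auto

lemma trips_dir:
  assumes "successively (\<lambda>x y. (x, y) \<in> R) d" "(x, y, z) \<in> set (trips (a # d))"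
  shows "(y, z) \<in> R \<and> y \<in> set d"
proof -
  obtain i where i: "Suc (Suc i) < length (a # d)" "(x, y, z) = ((a#d)!i, (a#d)!Suc i, (a#d)!Suc (Suc i))"
    using assms(2) by (auto simp: set_trips)
  then have "y = d ! i" "z = d ! Suc i" "Suc i < length d" by auto
  then show ?thesis using assms(1) by (auto simp: succ_nth)
qed

lemma reroute:
  assumes acy: "acyclic R" and sa: "successively (adj R) w" and w: "w = xs @ [a, c, b] @ ys"
    and ac: "(a, c) \<in> R" and bc: "(b, c) \<in> R" and okw: "\<forall>t\<in>set (trips w). ok R S Z t"
    and cl: "(c, last w) \<in> R\<^sup>*" and nz: "\<forall>y. (c, y) \<in> R\<^sup>* \<longrightarrow> y \<notin> Z" and cA: "c \<notin> A"
  shows "\<exists>w'. successively (adj R) w' \<and> w' \<noteq> [] \<and> hd w' = hd w \<and> last w' = last w \<and>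
     (\<forall>t\<in>set (trips w'). ok R S Z t) \<and> nbad R A w' < nbad R A w"
proof -
  obtain d where d: "d \<noteq> []" "hd d = c" "last d = last w" "successively (\<lambda>x y. (x, y) \<in> R) d"
    "\<forall>y\<in>set d. (c, y) \<in> R\<^sup>*"
    using dpath[OF cl] by blast
  then obtain d' where dd: "d = c # d'" by (cases d) auto
  define w' where "w' = xs @ [a, c] @ d'"
  have w'2: "w' = (xs @ [a]) @ d" by (simp add: w'_def dd)
  have tw': "trips w' = trips (xs @ [a, c]) @ trips (a # d)"
    using trips_split[of xs a c d'] by (simp add: w'_def dd)
  have tw: "trips w = trips (xs @ [a, c]) @ ((a, c, b) # trips (c # b # ys))"
    using trips_split[of xs a c "b # ys"] w by simp
  have dtr: "\<forall>t\<in>set (trips (a # d)). ok R S Z t \<and> \<not> bad R A t"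
  proof
    fix t assume t: "t \<in> set (trips (a # d))"
    obtain x y z where xyz: "t = (x, y, z)" by (cases t) auto
    from trips_dir[OF d(4)] t xyz have "(y, z) \<in> R" "y \<in> set d" by auto
    then have "(z, y) \<notin> R" "y \<notin> Z" using acyc2[OF acy, of y z] nz d(5) by auto
    then show "ok R S Z t \<and> \<not> bad R A t" by (simp add: xyz ok_def bad_def)
  qed
  have pre: "set (trips (xs @ [a, c])) \<subseteq> set (trips w)"
    using trips_prefix[of "xs @ [a, c]" "b # ys"] w by simp
  have "successively (adj R) (xs @ [a])" using sa w by (simp add: successively_append_iff)
  moreover have "successively (adj R) d" using d(4) by (rule successively_mono) (auto simp: adj_def)
  ultimately have sa': "successively (adj R) w'" using ac d(2) d(1)
    by (simp add: w'2 successively_append_iff adj_def dd)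
  have "nbad R A w' = length (filter (bad R A) (trips (xs @ [a, c])))"
    using dtr by (simp add: nbad_def tw' filter_empty_conv)
  also have "\<dots> < nbad R A w" using ac bc cA by (simp add: nbad_def tw bad_def)
  finally have lt: "nbad R A w' < nbad R A w" .
  have "hd w' = hd w" by (cases xs) (simp_all add: w'_def w)
  moreover have "last w' = last w" using d(1,3) by (simp add: w'2)
  moreover have "\<forall>t\<in>set (trips w'). ok R S Z t" using tw' dtr pre okw by auto
  ultimately show ?thesis using sa' lt by (intro exI[of _ w']) (simp add: w'_def)
qed

lemma stepB:
  assumes acy: "acyclic R" and RV: "R \<subseteq> V \<times> V"
  shows "successively (adj R) w \<Longrightarrow> w \<noteq> [] \<Longrightarrow> (\<forall>t\<in>set (trips w). ok R (An V R Z \<union> T) Z t) \<Longrightarrow>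
    (\<forall>c\<in>T. (c, hd w) \<in> R\<^sup>* \<or> (c, last w) \<in> R\<^sup>*) \<Longrightarrow>
    \<exists>w'. successively (adj R) w' \<and> w' \<noteq> [] \<and> hd w' = hd w \<and> last w' = last w \<and>
       (\<forall>t\<in>set (trips w'). ok R (An V R Z) Z t)"
proof (induction "nbad R (An V R Z) w" arbitrary: w rule: less_induct)
  case less
  show ?case
  proof (cases "nbad R (An V R Z) w = 0")
    case True
    then have "\<forall>t\<in>set (trips w). \<not> bad R (An V R Z) t" by (simp add: nbad_def filter_empty_conv)
    then have "\<forall>t\<in>set (trips w). ok R (An V R Z) Z t" using less.prems(3)
      by (fastforce simp: ok_def bad_def split: prod.splits if_splits)
    then show ?thesis using less.prems by blast
  next
    case False
    then obtain t where t: "t \<in> set (trips w)" "bad R (An V R Z) t"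
      by (metis filter_False length_0_conv nbad_def)
    then obtain xs ys a c b where tt: "t = (a, c, b)" and w: "w = xs @ [a, c, b] @ ys"
      using trips_decomp by blast
    have ac: "(a, c) \<in> R" and bc: "(b, c) \<in> R" and cA: "c \<notin> An V R Z" using t(2) tt by (auto simp: bad_def)
    have "c \<in> An V R Z \<union> T" using less.prems(3) t(1) tt ac bc by (auto simp: ok_def)
    then have cT: "c \<in> T" using cA by blast
    have cV: "c \<in> V" using ac RV by blast
    have nz: "\<forall>y. (c, y) \<in> R\<^sup>* \<longrightarrow> y \<notin> Z" using cA cV by (auto simp: An_def)
    from less.prems(4) cT consider "(c, last w) \<in> R\<^sup>*" | "(c, hd w) \<in> R\<^sup>*" by blast
    then show ?thesis
    proof cases
      case 1
      from reroute[OF acy less.prems(1) w ac bc less.prems(3) 1 nz cA] obtain w' where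
        w': "successively (adj R) w'" "w' \<noteq> []" "hd w' = hd w" "last w' = last w"
        "\<forall>t\<in>set (trips w'). ok R (An V R Z \<union> T) Z t" "nbad R (An V R Z) w' < nbad R (An V R Z) w"
        by blast
      from less.hyps[OF w'(6) w'(1,2,5)] w' less.prems(4) show ?thesis by metis
    next
      case 2
      have sr: "successively (adj R) (rev w)" using less.prems(1) by (simp only: adj_rev)
      have wr: "rev w = rev ys @ [b, c, a] @ rev xs" using w by simp
      have okr: "\<forall>t\<in>set (trips (rev w)). ok R (An V R Z \<union> T) Z t" using ok_rev less.prems(3) by blast
      have cl: "(c, last (rev w)) \<in> R\<^sup>*" using 2 less.prems(2) by (simp add: last_rev)
      from reroute[OF acy sr wr bc ac okr cl nz cA] obtain w'' where
        w'': "successively (adj R) w''" "w'' \<noteq> []" "hd w'' = hd (rev w)" "last w'' = last (rev w)"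
        "\<forall>t\<in>set (trips w''). ok R (An V R Z \<union> T) Z t" "nbad R (An V R Z) w'' < nbad R (An V R Z) (rev w)"
        by blast
      define w' where "w' = rev w''"
      have w': "successively (adj R) w'" "w' \<noteq> []" "hd w' = hd w" "last w' = last w"
        "\<forall>t\<in>set (trips w'). ok R (An V R Z \<union> T) Z t" "nbad R (An V R Z) w' < nbad R (An V R Z) w"
        using w'' less.prems(2) ok_rev[OF w''(5)]
        by (auto simp: w'_def adj_rev hd_rev last_rev nbad_rev simp del: successively_rev)
      from less.hyps[OF w'(6) w'(1,2,5)] w' less.prems(4) show ?thesis by metis
    qed
  qed
qed

lemma shortcut_ok:
  assumes acy: "acyclic R" and sw: "successively (adj R) w" and wV: "set w \<subseteq> V"
    and okw: "\<forall>t\<in>set (trips w). ok R (An V R Z) Z t"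
    and w: "w = xs' @ [a, v] @ ys @ [v, b] @ zs'"
  shows "ok R (An V R Z) Z (a, v, b)"
proof -
  obtain n1 r where nr: "ys @ [v] = n1 # r" by (cases "ys @ [v]") auto
  obtain r' p2 where rp: "v # ys = r' @ [p2]" by (metis append_butlast_last_id list.distinct(1))
  have w1: "w = xs' @ [a, v, n1] @ (r @ b # zs')" using w nr by simp
  have w2: "w = (xs' @ [a] @ r') @ [p2, v, b] @ zs'" using w rp by simp
  define seg where "seg = v # n1 # (r @ [b])"
  have w3: "w = (xs' @ [a]) @ seg @ zs'" using w nr by (simp add: seg_def)
  have t1: "ok R (An V R Z) Z (a, v, n1)" using okw trips_infix w1 by metis
  have t2: "ok R (An V R Z) Z (p2, v, b)" using okw trips_infix w2 by metis
  have sseg: "successively (adj R) seg" using sw w3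
    successively_append_iff[of "adj R" "xs' @ [a]" "seg @ zs'"] successively_append_iff[of "adj R" seg zs'] by simp
  have tseg: "set (trips seg) \<subseteq> set (trips w)" using w3 trips_prefix trips_suffix by (metis append.assoc subset_trans)
  have vV: "v \<in> V" using wV w by auto
  show ?thesis
  proof (cases "(a, v) \<in> R \<and> (b, v) \<in> R")
    case True
    have "v \<in> An V R Z"
    proof (cases "v \<in> Z")
      case True then show ?thesis using vV by (auto simp: An_def)
    next
      case False
      show ?thesis
      proof (cases "(n1, v) \<in> R")
        case True then show ?thesis using t1 \<open>(a, v) \<in> R \<and> (b, v) \<in> R\<close> by (simp add: ok_def)
      next
        case False
        then have vn: "(v, n1) \<in> R" using sseg by (simp add: seg_def adj_def)
        from chain[OF sseg[unfolded seg_def] vn] show ?thesis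
        proof
          assume "\<exists>a' b' c'. (a', b', c') \<in> set (trips (v # n1 # r @ [b])) \<and> (a', b') \<in> R \<and> (c', b') \<in> R \<and> (v, b') \<in> R\<^sup>*"
          then obtain a' b' c' where c: "(a', b', c') \<in> set (trips seg)" "(a', b') \<in> R" "(c', b') \<in> R" "(v, b') \<in> R\<^sup>*"
            unfolding seg_def by blast
          then have "b' \<in> An V R Z" using okw tseg by (fastforce simp: ok_def)
          then show ?thesis using c(4) vV by (auto simp: An_def intro: rtrancl_trans)
        next
          assume "successively (\<lambda>x y. (x, y) \<in> R) (v # n1 # r @ [b])"
          then have "(last (n1 # r), b) \<in> R"
            using successively_append_iff[of "\<lambda>x y. (x, y) \<in> R" "v # n1 # r" "[b]"] by simp
          moreover have "last (n1 # r) = v" using nr by (metis last_snoc)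
          ultimately show ?thesis using True acyc2[OF acy] by blast
        qed
      qed
    qed
    then show ?thesis using True by (simp add: ok_def)
  next
    case False
    have "v \<notin> Z"
    proof
      assume "v \<in> Z"
      then have "(a, v) \<in> R" "(b, v) \<in> R" using t1 t2 by (auto simp: ok_def split: if_splits)
      then show False using False by blast
    qed
    then show ?thesis using False by (auto simp: ok_def)
  qed
qed

lemma stepC:
  assumes acy: "acyclic R"
  shows "successively (adj R) w \<Longrightarrow> w \<noteq> [] \<Longrightarrow> set w \<subseteq> V \<Longrightarrow> (\<forall>t\<in>set (trips w). ok R (An V R Z) Z t) \<Longrightarrow>
    \<exists>q. distinct q \<and> successively (adj R) q \<and> q \<noteq> [] \<and> hd q = hd w \<and> last q = last w \<and>
       (\<forall>t\<in>set (trips q). ok R (An V R Z) Z t)"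
proof (induction "length w" arbitrary: w rule: less_induct)
  case less
  show ?case
  proof (cases "distinct w")
    case True then show ?thesis using less.prems by blast
  next
    case False
    then obtain xs ys zs v where w: "w = xs @ [v] @ ys @ [v] @ zs" using not_distinct_decomp by blast
    define w' where "w' = xs @ [v] @ zs"
    have len: "length w' < length w" by (simp add: w w'_def)
    have ne: "w' \<noteq> []" by (simp add: w'_def)
    have sV: "set w' \<subseteq> V" using less.prems(3) by (auto simp: w w'_def)
    have hd: "hd w' = hd w" by (cases xs) (auto simp: w w'_def)
    have lst: "last w' = last w" by (cases zs) (auto simp: w w'_def)
    have S1: "successively (adj R) (xs @ [v])" using less.prems(1) w
      by (simp add: successively_append_iff)
    have S2: "successively (adj R) (v # zs)" using less.prems(1) w
      using successively_append_iff[of _ "xs @ [v] @ ys" "v # zs"] by simp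
    have sw': "successively (adj R) w'" using S1 S2 by (cases zs) (auto simp: w'_def successively_append_iff)
    have okw': "\<forall>t\<in>set (trips w'). ok R (An V R Z) Z t"
    proof (cases "xs = [] \<or> zs = []")
      case True
      then show ?thesis
      proof
        assume "xs = []"
        then show ?thesis using less.prems(4) trips_suffix[of "v # zs" "xs @ [v] @ ys"]
          by (auto simp: w w'_def)
      next
        assume "zs = []"
        then show ?thesis using less.prems(4) trips_prefix[of "xs @ [v]" "ys @ [v] @ zs"]
          by (auto simp: w w'_def)
      qed
    next
      case False
      then obtain xs' a b zs' where xa: "xs = xs' @ [a]" and zb: "zs = b # zs'"
        by (metis neq_Nil_conv rev_exhaust)
      have tw': "trips w' = trips (xs' @ [a, v]) @ ((a, v, b) # trips (v # b # zs'))"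
        using trips_split[of xs' a v "b # zs'"] by (simp add: w'_def xa zb)
      have w2: "w = xs' @ [a, v] @ ys @ [v, b] @ zs'" by (simp add: w xa zb)
      have "ok R (An V R Z) Z (a, v, b)" using shortcut_ok[OF acy less.prems(1,3,4) w2] .
      moreover have "set (trips (xs' @ [a, v])) \<subseteq> set (trips w)"
        using trips_prefix[of "xs' @ [a, v]" "ys @ [v, b] @ zs'"] w2 by simp
      moreover have "set (trips (v # b # zs')) \<subseteq> set (trips w)"
        using trips_suffix[of "v # b # zs'" "xs' @ [a, v] @ ys"] w2 by simp
      ultimately show ?thesis using tw' less.prems(4) by auto
    qed
    from less.hyps[OF len sw' ne sV okw'] hd lst show ?thesis by metis
  qed
qed

lemma anc_remove: "(z, s) \<in> E\<^sup>* \<Longrightarrow> (z, s) \<in> (remove_out E X)\<^sup>* \<or> (z, X) \<in> (remove_out E X)\<^sup>*"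
proof (induction rule: converse_rtrancl_induct)
  case base then show ?case by simp
next
  case (step y y')
  show ?case
  proof (cases "y = X")
    case True then show ?thesis by simp
  next
    case False
    then have "(y, y') \<in> remove_out E X" using step(1) by (simp add: remove_out_def)
    then show ?thesis using step(3) by (meson converse_rtrancl_into_rtrancl)
  qed
qed

lemma len2: "w \<noteq> [] \<Longrightarrow> hd w \<noteq> last w \<Longrightarrow> 2 \<le> length w"
  by (cases w; cases "tl w") auto

theorem lemma1:
  fixes V Obs Lat Pa :: "'v set" and E :: "('v \<times> 'v) set" and X Y :: 'v
  assumes "is_dag V E"
    and "V = Obs \<union> Lat" and "Obs \<inter> Lat = {}"
    and "X \<in> Obs" and "Y \<in> V" and "X \<noteq> Y"
    and "Pa \<subseteq> Obs - De V E {X}"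
    and "\<exists>Z'. pi_backdoor_admissible V E Pa X Y Z'"
  shows "pi_backdoor_admissible V E Pa X Y (An V E {X, Y} \<inter> Pa)"
proof -
  define R where "R = remove_out E X"
  define Z0 where "Z0 = An V E {X, Y} \<inter> Pa"
  have RE: "R \<subseteq> E" by (auto simp: R_def remove_out_def)
  have EV: "E \<subseteq> V \<times> V" and acyE: "acyclic E" using assms(1) by (auto simp: is_dag_def)
  have acy: "acyclic R" using acyclic_subset[OF acyE RE] .
  have RV: "R \<subseteq> V \<times> V" using RE EV by blast
  have RsE: "R\<^sup>* \<subseteq> E\<^sup>*" using RE by (rule rtrancl_mono)
  obtain Z' where Z': "Z' \<subseteq> Pa" "d_separated V R Y X Z'"
    using assms(8) by (auto simp: pi_backdoor_admissible_def R_def)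
  have "d_separated V R Y X Z0" unfolding d_separated_def
  proof
    assume "\<exists>p. is_path R p X Y \<and> active_path V R Z0 p"
    then obtain p where pp: "is_path R p X Y" and ap: "active_path V R Z0 p" by blast
    have okp: "\<forall>t\<in>set (trips p). ok R (An V R Z0) Z0 t" using ap by (simp add: active_path_iff)
    have sp: "successively (adj R) p" using pp by (simp add: is_path_def succ_nth adj_def)
    have hp: "hd p = X" "last p = Y" "p \<noteq> []" using pp by (auto simp: is_path_def)
    have pV: "set p \<subseteq> V" using succ_adj_V[OF sp RV] pp by (simp add: is_path_def)
    define T where "T = {c. (c, X) \<in> R\<^sup>* \<or> (c, Y) \<in> R\<^sup>*}"
    have ancR: "(z, X) \<in> R\<^sup>* \<or> (z, Y) \<in> R\<^sup>*" if "z \<in> Z0" for z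
    proof -
      from that obtain s where "s \<in> {X, Y}" "(z, s) \<in> E\<^sup>*" by (auto simp: Z0_def An_def)
      then show ?thesis using anc_remove[of z s E X] by (auto simp: R_def)
    qed
    have ancR2: "(b, X) \<in> R\<^sup>* \<or> (b, Y) \<in> R\<^sup>*" if "b \<in> An V R Z0" for b
    proof -
      from that obtain z where "z \<in> Z0" "(b, z) \<in> R\<^sup>*" by (auto simp: An_def)
      then show ?thesis using ancR by (meson rtrancl_trans)
    qed
    have okA: "\<forall>t\<in>set (trips p). ok R (An V R Z' \<union> T) Z' t"
    proof
      fix t assume t: "t \<in> set (trips p)"
      then obtain xs ys a b c where tt: "t = (a, b, c)" and p: "p = xs @ [a, b, c] @ ys"
        using trips_decomp by blast
      have okt: "ok R (An V R Z0) Z0 (a, b, c)" using okp t tt by blast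
      show "ok R (An V R Z' \<union> T) Z' t"
      proof (cases "(a, b) \<in> R \<and> (c, b) \<in> R")
        case True
        then have "b \<in> An V R Z0" using okt by (simp add: ok_def)
        then have "b \<in> T" using ancR2 by (simp add: T_def)
        then show ?thesis using True tt by (simp add: ok_def)
      next
        case False
        then have bZ0: "b \<notin> Z0" using okt by (simp add: ok_def)
        have "b \<notin> Z'"
        proof
          assume bZ': "b \<in> Z'"
          have bV: "b \<in> V" using pV p by auto
          have sabc: "successively (adj R) [a, b, c]" using sp p
            successively_append_iff[of "adj R" xs "[a, b, c] @ ys"] successively_append_iff[of "adj R" "[a, b, c]" ys]
            by simp
          then have "(b, c) \<in> R \<or> (b, a) \<in> R" using False by (auto simp: adj_def)
          then have reach: "(b, X) \<in> R\<^sup>* \<or> (b, Y) \<in> R\<^sup>*"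
          proof
            assume bc: "(b, c) \<in> R"
            have "p = (xs @ [a]) @ [b, c] @ ys" using p by simp
            from H[OF sp okp this bc] show ?thesis using hp ancR2 by (meson rtrancl_trans)
          next
            assume ba: "(b, a) \<in> R"
            have sr: "successively (adj R) (rev p)" using sp by (simp only: adj_rev)
            have "rev p = (rev ys @ [c]) @ [b, a] @ rev xs" using p by simp
            from H[OF sr ok_rev[OF okp] this ba] show ?thesis using hp ancR2
              by (metis last_rev rtrancl_trans)
          qed
          then have "b \<in> An V E {X, Y}" using RsE bV by (auto simp: An_def)
          then have "b \<in> Z0" using bZ' Z'(1) by (auto simp: Z0_def)
          then show False using bZ0 by blast
        qed
        then show ?thesis using False tt by (auto simp: ok_def)
      qed
    qed
    have "\<forall>c\<in>T. (c, hd p) \<in> R\<^sup>* \<or> (c, last p) \<in> R\<^sup>*" using hp by (simp add: T_def)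
    from stepB[OF acy RV sp hp(3) okA this] obtain w where
      w: "successively (adj R) w" "w \<noteq> []" "hd w = hd p" "last w = last p" "\<forall>t\<in>set (trips w). ok R (An V R Z') Z' t"
      by blast
    have "2 \<le> length w" using len2 w hp assms(6) by metis
    then have wV: "set w \<subseteq> V" using succ_adj_V[OF w(1) RV] by blast
    from stepC[OF acy w(1,2) wV w(5)] obtain q where
      q: "distinct q" "successively (adj R) q" "q \<noteq> []" "hd q = hd w" "last q = last w"
         "\<forall>t\<in>set (trips q). ok R (An V R Z') Z' t"
      by blast
    have "2 \<le> length q" using len2 q w hp assms(6) by metis
    then have "is_path R q X Y" using q w hp by (auto simp: is_path_def succ_nth adj_def)
    moreover have "active_path V R Z' q" using q(6) by (simp add: active_path_iff)
    ultimately show False using Z'(2) by (auto simp: d_separated_def)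
  qed
  then show ?thesis by (simp add: pi_backdoor_admissible_def R_def Z0_def)
qed

end
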